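(* Let $W\in\mathbb{Z}^{m\times n}$, let $P=\{Wx: x\in[0,1]^n\}$, and let $g: P\to\mathbb{R}$ be convex and continuously differentiable with $L$-Lipschitz continuous gradients (i.e. $\|\nabla g(u)-\nabla g(v)\|_\infty\le L\|u-v\|_1$ for all $u,v\in P$), satisfying the sharpness condition on $P$ with parameters $\mu>0$ and $\theta\in[0,1]$. Then $f(x)=g(Wx)$ admits a $\delta$-proximity with \[ \delta \le \left(\mu\left(m^4\tfrac{L}{4}\|W\|_\infty^2\right)^\theta + m + 2\right)(2m\|W\|_\infty+1)^m; \] that is, for every minimizer $x^\star$ of $f$ over $[0,1]^n$ with at most $m$ fractional entries there exists a minimizer $z^\star$ of $f$ over $\{0,1\}^n$ with $\|x^\star-z^\star\|_1$ at most the right-hand side.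
   Context: $\|W\|_\infty$ is the maximum absolute entry of $W$. A fractional entry of $x\in[0,1]^n$ is an entry not in $\{0,1\}$. Sharpness (Hölder error bound): for a convex set $P\subseteq\mathbb{R}^m$ and convex $g:P\to\mathbb{R}$ attaining its minimum on $P$ at $v^\star$, $g$ satisfies the sharpness condition on $P$ with parameters $0<\mu<\infty$ and $\theta\in[0,1]$ if $\mu\,(g(u)-g(v^\star))^\theta \ge \|u-v^\star\|_1$ for all $u\in P$. *)

theory Defs
  imports "HOL-Analysis.Analysis"
begin

definition norm1 :: "real ^ 'm \<Rightarrow> real" where
  "norm1 x = (\<Sum>i\<in>UNIV. \<bar>x $ i\<bar>)"

definition norminf :: "real ^ 'm \<Rightarrow> real" where
  "norminf x = Max ((\<lambda>i. \<bar>x $ i\<bar>) ` UNIV)"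

definition matinf :: "int ^ 'n ^ 'm \<Rightarrow> real" where
  "matinf W = Max {real_of_int \<bar>W $ i $ j\<bar> | i j. True}"

definition realmat :: "int ^ 'n ^ 'm \<Rightarrow> real ^ 'n ^ 'm" where
  "realmat W = (\<chi> i j. real_of_int (W $ i $ j))"

text \<open>Real power with the convention 0^0 = 1 (Isabelle's powr has 0 powr 0 = 0).\<close>
definition rpow :: "real \<Rightarrow> real \<Rightarrow> real" where
  "rpow x t = (if x = 0 then (if t = 0 then 1 else 0) else x powr t)"

definition unit_box :: "(real ^ 'n) set" where
  "unit_box = {x. \<forall>i. 0 \<le> x $ i \<and> x $ i \<le> 1}"

definition binary_points :: "(real ^ 'n) set" where
  "binary_points = {x. \<forall>i. x $ i = 0 \<or> x $ i = 1}"

definition fractional_entries :: "real ^ 'n \<Rightarrow> 'n set" where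
  "fractional_entries x = {i. x $ i \<noteq> 0 \<and> x $ i \<noteq> 1}"

definition sharp :: "(real ^ 'm) set \<Rightarrow> (real ^ 'm \<Rightarrow> real) \<Rightarrow> real \<Rightarrow> real \<Rightarrow> bool" where
  "sharp P g \<mu> \<theta> \<longleftrightarrow> 0 < \<mu> \<and> 0 \<le> \<theta> \<and> \<theta> \<le> 1 \<and>
     (\<exists>v\<in>P. (\<forall>u\<in>P. g v \<le> g u) \<and> (\<forall>u\<in>P. \<mu> * rpow (g u - g v) \<theta> \<ge> norm1 (u - v)))"

end

theory Submission
  imports Defs
begin


lemma family_dependent:
  fixes u :: "'i \<Rightarrow> real^'m"
  assumes fin: "finite Fr" and cardF: "card Fr > CARD('m) + 1"
  shows "\<exists>\<delta>. (\<exists>i\<in>Fr. \<delta> i \<noteq> 0) \<and> (\<Sum>i\<in>Fr. \<delta> i) = 0 \<and> (\<Sum>i\<in>Fr. \<delta> i *\<^sub>R u i) = 0"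
proof -
  define v where "v i = (u i, 1::real)" for i
  show ?thesis
  proof (cases "inj_on v Fr")
    case False
    then obtain i j where ij: "i \<in> Fr" "j \<in> Fr" "i \<noteq> j" "v i = v j" unfolding inj_on_def by blast
    then have uij: "u i = u j" by (simp add: v_def)
    define \<delta> where "\<delta> k = (if k = i then 1 else if k = j then -1 else (0::real))" for k
    have s1: "(\<Sum>k\<in>Fr. \<delta> k) = (\<Sum>k\<in>{i,j}. \<delta> k)"
      by (rule sum.mono_neutral_right) (use fin ij in \<open>auto simp: \<delta>_def\<close>)
    have s2: "(\<Sum>k\<in>Fr. \<delta> k *\<^sub>R u k) = (\<Sum>k\<in>{i,j}. \<delta> k *\<^sub>R u k)"
      by (rule sum.mono_neutral_right) (use fin ij in \<open>auto simp: \<delta>_def\<close>)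
    show ?thesis
      apply (rule exI[of _ \<delta>])
      apply (simp only: s1 s2)
      using ij uij by (auto simp: \<delta>_def)
  next
    case True
    have "card (v ` Fr) = card Fr" using True by (simp add: card_image)
    then have "card (v ` Fr) > DIM((real^'m) \<times> real)" using cardF by simp
    then have "dependent (v ` Fr)" using independent_bound by fastforce
    then obtain c where c: "\<exists>x\<in>v ` Fr. c x \<noteq> 0" "(\<Sum>x\<in>v ` Fr. c x *\<^sub>R x) = 0"
      using dependent_finite[of "v ` Fr"] fin by auto
    define \<delta> where "\<delta> i = c (v i)" for i
    have "(\<Sum>i\<in>Fr. \<delta> i *\<^sub>R v i) = 0"
      using c(2) sum.reindex[OF True, of "\<lambda>x. c x *\<^sub>R x"] by (simp add: \<delta>_def o_def)
    then have e: "(\<Sum>i\<in>Fr. (\<delta> i *\<^sub>R u i, \<delta> i)) = 0" by (simp add: v_def)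
    have "fst (\<Sum>i\<in>Fr. (\<delta> i *\<^sub>R u i, \<delta> i)) = (\<Sum>i\<in>Fr. \<delta> i *\<^sub>R u i)"
         "snd (\<Sum>i\<in>Fr. (\<delta> i *\<^sub>R u i, \<delta> i)) = (\<Sum>i\<in>Fr. \<delta> i)"
      by (simp_all add: fst_sum snd_sum)
    then show ?thesis using e c(1) by (auto simp: \<delta>_def)
  qed
qed

lemma vertex_zero:
  fixes u :: "'i \<Rightarrow> real^'m" and lam :: "'i \<Rightarrow> real"
  assumes fin: "finite A"
    and feas: "\<forall>i\<in>A. 0 \<le> lam i \<and> lam i \<le> 1" "(\<Sum>i\<in>A. lam i) = s" "(\<Sum>i\<in>A. lam i *\<^sub>R u i) = y"
    and sle: "s + real (CARD('m)) + 1 \<le> real (card A)"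
  shows "\<exists>l. (\<forall>i\<in>A. 0 \<le> l i \<and> l i \<le> 1) \<and> (\<Sum>i\<in>A. l i) = s \<and> (\<Sum>i\<in>A. l i *\<^sub>R u i) = y \<and> (\<exists>i\<in>A. l i = 0)"
proof -
  define Feas where "Feas (l::'i \<Rightarrow> real) \<longleftrightarrow> (\<forall>i\<in>A. 0 \<le> l i \<and> l i \<le> 1) \<and> (\<Sum>i\<in>A. l i) = s \<and> (\<Sum>i\<in>A. l i *\<^sub>R u i) = y" for l
  define ic where "ic (l::'i \<Rightarrow> real) = card {i\<in>A. l i = 0 \<or> l i = 1}" for l
  have "Feas lam" using feas by (simp add: Feas_def)
  moreover have "\<forall>l. Feas l \<longrightarrow> ic l < card A + 1"
    unfolding ic_def using fin by (simp add: card_mono le_imp_less_Suc)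
  ultimately obtain l where l: "Feas l" "\<And>l'. Feas l' \<Longrightarrow> ic l' \<le> ic l"
    using ex_has_greatest_nat[of Feas lam ic "card A + 1"] by blast
  define Fr where "Fr = {i\<in>A. 0 < l i \<and> l i < 1}"
  have finFr: "finite Fr" using fin by (simp add: Fr_def)
  have lb: "\<forall>i\<in>A. 0 \<le> l i \<and> l i \<le> 1" "(\<Sum>i\<in>A. l i) = s" "(\<Sum>i\<in>A. l i *\<^sub>R u i) = y"
    using l(1) by (auto simp: Feas_def)
  have frsmall: "card Fr \<le> CARD('m) + 1"
  proof (rule ccontr)
    assume "\<not> card Fr \<le> CARD('m) + 1"
    then obtain \<delta> where \<delta>: "\<exists>i\<in>Fr. \<delta> i \<noteq> 0" "(\<Sum>i\<in>Fr. \<delta> i) = 0" "(\<Sum>i\<in>Fr. \<delta> i *\<^sub>R u i) = 0"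
      using family_dependent[OF finFr, of u] by auto
    define d where "d i = (if i \<in> Fr then \<delta> i else 0)" for i
    have FrA: "Fr \<subseteq> A" by (auto simp: Fr_def)
    have sd: "(\<Sum>i\<in>A. d i) = 0"
      using \<delta>(2) sum.mono_neutral_cong_right[OF fin FrA, of d \<delta>] by (auto simp: d_def)
    have sdu: "(\<Sum>i\<in>A. d i *\<^sub>R u i) = 0"
      using \<delta>(3) sum.mono_neutral_cong_right[OF fin FrA, of "\<lambda>i. d i *\<^sub>R u i" "\<lambda>i. \<delta> i *\<^sub>R u i"]
      by (auto simp: d_def)
    define J where "J = {i\<in>Fr. \<delta> i \<noteq> 0}"
    define bnd where "bnd i = (if \<delta> i > 0 then (1 - l i)/\<delta> i else - l i/\<delta> i)" for i
    define s0 where "s0 = Min (bnd ` J)"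
    have finJ: "finite J" "J \<noteq> {}" using finFr \<delta>(1) by (auto simp: J_def)
    have "s0 \<in> bnd ` J" unfolding s0_def using finJ by (intro Min_in) auto
    then obtain i0 where i0: "i0 \<in> J" "s0 = bnd i0" by auto
    have s0le: "\<And>i. i \<in> J \<Longrightarrow> s0 \<le> bnd i" using finJ by (simp add: s0_def)
    have bpos: "\<And>i. i \<in> J \<Longrightarrow> 0 < bnd i"
      by (auto simp: bnd_def J_def Fr_def divide_pos_neg)
    have s0pos: "0 \<le> s0" using bpos[OF i0(1)] i0(2) by simp
    define l' where "l' i = l i + s0 * d i" for i
    have bnds: "\<forall>i\<in>A. 0 \<le> l' i \<and> l' i \<le> 1"
    proof
      fix i assume iA: "i \<in> A"
      show "0 \<le> l' i \<and> l' i \<le> 1"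
      proof (cases "i \<in> J")
        case False
        then have "d i = 0" by (auto simp: d_def J_def)
        then show ?thesis using lb(1) iA by (simp add: l'_def)
      next
        case True
        then have iF: "0 < l i" "l i < 1" "\<delta> i \<noteq> 0" "d i = \<delta> i" by (auto simp: J_def Fr_def d_def)
        have le: "s0 \<le> bnd i" using s0le True by simp
        show ?thesis
        proof (cases "\<delta> i > 0")
          case True
          have "s0 * \<delta> i \<le> bnd i * \<delta> i" using le True by (simp add: mult_right_mono)
          also have "\<dots> = 1 - l i" using True by (simp add: bnd_def)
          finally show ?thesis using True s0pos iF by (simp add: l'_def)
        next
          case False
          then have neg: "\<delta> i < 0" using iF by simp
          have "s0 * \<delta> i \<ge> bnd i * \<delta> i" using le neg by (simp add: mult_right_mono_neg)
          moreover have "bnd i * \<delta> i = - l i" using neg by (simp add: bnd_def)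
          moreover have "s0 * \<delta> i \<le> 0" using s0pos neg by (simp add: mult_nonneg_nonpos)
          ultimately show ?thesis using iF by (simp add: l'_def)
        qed
      qed
    qed
    have "(\<Sum>i\<in>A. l' i) = s" using lb(2) sd by (simp add: l'_def sum.distrib sum_distrib_left[symmetric])
    moreover have "(\<Sum>i\<in>A. l' i *\<^sub>R u i) = y"
    proof -
      have "(\<Sum>i\<in>A. l' i *\<^sub>R u i) = (\<Sum>i\<in>A. l i *\<^sub>R u i) + s0 *\<^sub>R (\<Sum>i\<in>A. d i *\<^sub>R u i)"
        by (simp add: l'_def scaleR_add_left sum.distrib scaleR_sum_right)
      then show ?thesis using lb(3) sdu by simp
    qed
    ultimately have "Feas l'" using bnds by (simp add: Feas_def)
    then have le1: "ic l' \<le> ic l" using l(2) by blast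
    have sub: "{i\<in>A. l i = 0 \<or> l i = 1} \<subset> {i\<in>A. l' i = 0 \<or> l' i = 1}"
    proof
      show "{i\<in>A. l i = 0 \<or> l i = 1} \<subseteq> {i\<in>A. l' i = 0 \<or> l' i = 1}"
        by (auto simp: l'_def d_def Fr_def)
      have i0A: "i0 \<in> A" "0 < l i0" "l i0 < 1" "\<delta> i0 \<noteq> 0" "d i0 = \<delta> i0" using i0(1) by (auto simp: J_def Fr_def d_def)
      have "l' i0 = 0 \<or> l' i0 = 1"
      proof (cases "\<delta> i0 > 0")
        case True then show ?thesis using i0(2) i0A by (simp add: l'_def bnd_def)
      next
        case False then show ?thesis using i0(2) i0A by (simp add: l'_def bnd_def)
      qed
      then have "i0 \<in> {i\<in>A. l' i = 0 \<or> l' i = 1}" "i0 \<notin> {i\<in>A. l i = 0 \<or> l i = 1}"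
        using i0A by auto
      then show "{i\<in>A. l i = 0 \<or> l i = 1} \<noteq> {i\<in>A. l' i = 0 \<or> l' i = 1}"
        by blast
    qed
    have "ic l < ic l'" unfolding ic_def using psubset_card_mono[OF _ sub] fin by simp
    then show False using le1 by simp
  qed
  have "\<exists>i\<in>A. l i = 0"
  proof (rule ccontr)
    assume nz: "\<not> (\<exists>i\<in>A. l i = 0)"
    define On where "On = {i\<in>A. l i = 1}"
    have AU: "A = Fr \<union> On" "Fr \<inter> On = {}" using nz lb(1) by (force simp: Fr_def On_def)+
    have finOn: "finite On" using fin by (simp add: On_def)
    have cA: "card A = card Fr + card On" using AU finFr finOn by (simp add: card_Un_disjoint)
    have sOn: "(\<Sum>i\<in>On. l i) = real (card On)" by (simp add: On_def)
    have "(\<Sum>i\<in>A. l i) = (\<Sum>i\<in>Fr. l i) + (\<Sum>i\<in>On. l i)"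
      by (subst AU(1), rule sum.union_disjoint) (use AU finFr finOn in auto)
    then have sA: "(\<Sum>i\<in>A. l i) = (\<Sum>i\<in>Fr. l i) + real (card On)" using sOn by simp
    show False
    proof (cases "Fr = {}")
      case True
      then show False using sA cA lb(2) sle by simp
    next
      case False
      have "(\<Sum>i\<in>Fr. l i) > 0" using False finFr by (intro sum_pos) (auto simp: Fr_def)
      then show False using sA cA lb(2) sle frsmall by linarith
    qed
  qed
  then show ?thesis using lb by blast
qed



lemma chain_bound:
  fixes u :: "'i \<Rightarrow> real^'m" and D :: "'i set" and r :: "real^'m" and w :: real
  assumes fin: "finite D"
   and int: "\<forall>j\<in>D. \<forall>k. u j $ k \<in> \<int>"
   and bnd: "\<forall>j\<in>D. \<forall>k. \<bar>u j $ k\<bar> \<le> w"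
   and w0: "0 \<le> w"
   and r: "r = (\<Sum>j\<in>D. u j)"
   and zsf: "\<forall>B. B \<subseteq> D \<longrightarrow> B \<noteq> {} \<longrightarrow> (\<Sum>j\<in>B. u j) \<noteq> 0"
   and finT: "finite {q::real^'m. (\<forall>k. q$k \<in> \<int>) \<and> (\<exists>c. 0 \<le> c \<and> c \<le> 1 \<and> (\<forall>k. \<bar>q$k - c * r$k\<bar> \<le> real CARD('m) * w))}"
  shows "card D + 1 \<le> card {q::real^'m. (\<forall>k. q$k \<in> \<int>) \<and> (\<exists>c. 0 \<le> c \<and> c \<le> 1 \<and> (\<forall>k. \<bar>q$k - c * r$k\<bar> \<le> real CARD('m) * w))}"
proof -
  define T where "T = {q::real^'m. (\<forall>k. q$k \<in> \<int>) \<and> (\<exists>c. 0 \<le> c \<and> c \<le> 1 \<and> (\<forall>k. \<bar>q$k - c * r$k\<bar> \<le> real CARD('m) * w))}"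
  define m where "m = CARD('m)"
  define t where "t = card D"
  define good where "good A \<longleftrightarrow> A \<subseteq> D \<and> (\<exists>l. (\<forall>i\<in>A. 0 \<le> l i \<and> l i \<le> 1) \<and> (\<Sum>i\<in>A. l i) = real (card A) - real m
      \<and> (\<Sum>i\<in>A. l i *\<^sub>R u i) = ((real (card A) - real m) / real t) *\<^sub>R r)" for A
  have sumT: "(\<Sum>j\<in>A. u j) \<in> T" if AD: "A \<subseteq> D" and ca: "card A \<le> m \<or> good A" for A
  proof -
    have finA: "finite A" using AD fin finite_subset by blast
    have intq: "\<forall>k. (\<Sum>j\<in>A. u j) $ k \<in> \<int>" using int AD by (auto intro: Ints_sum)
    show ?thesis
    proof (cases "card A \<le> m")
      case True
      have "\<forall>k. \<bar>(\<Sum>j\<in>A. u j) $ k - 0 * r$k\<bar> \<le> real m * w"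
      proof
        fix k
        have "\<bar>(\<Sum>j\<in>A. u j) $ k\<bar> \<le> (\<Sum>j\<in>A. \<bar>u j $ k\<bar>)" by (simp only: sum_component sum_abs)
        also have "\<dots> \<le> (\<Sum>j\<in>A. w)" using bnd AD by (intro sum_mono) auto
        also have "\<dots> = real (card A) * w" by simp
        also have "\<dots> \<le> real m * w" using True w0 by (simp add: mult_right_mono)
        finally show "\<bar>(\<Sum>j\<in>A. u j) $ k - 0 * r$k\<bar> \<le> real m * w" by simp
      qed
      then show ?thesis using intq unfolding T_def m_def by (auto intro!: exI[of _ 0])
    next
      case False
      then have "good A" using ca by simp
      then obtain l where l: "\<forall>i\<in>A. 0 \<le> l i \<and> l i \<le> 1" "(\<Sum>i\<in>A. l i) = real (card A) - real m"
        "(\<Sum>i\<in>A. l i *\<^sub>R u i) = ((real (card A) - real m) / real t) *\<^sub>R r"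
        unfolding good_def by blast
      define c where "c = (real (card A) - real m) / real t"
      have cA: "card A \<le> t" unfolding t_def using AD fin by (simp add: card_mono)
      have c0: "0 \<le> c" using False c_def by simp
      have c1: "c \<le> 1" using cA c_def False by (simp add: divide_le_eq)
      have diff: "(\<Sum>j\<in>A. u j) - c *\<^sub>R r = (\<Sum>j\<in>A. (1 - l j) *\<^sub>R u j)"
        using l(3) by (simp add: c_def scaleR_diff_left sum_subtractf)
      have "\<forall>k. \<bar>(\<Sum>j\<in>A. u j) $ k - c * r$k\<bar> \<le> real m * w"
      proof
        fix k
        have "(\<Sum>j\<in>A. u j) $ k - c * r$k = ((\<Sum>j\<in>A. u j) - c *\<^sub>R r) $ k" by simp
        also have "\<dots> = (\<Sum>j\<in>A. (1 - l j) * u j $ k)" unfolding diff by simp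
        finally have e: "(\<Sum>j\<in>A. u j) $ k - c * r$k = (\<Sum>j\<in>A. (1 - l j) * u j $ k)" .
        have "\<bar>(\<Sum>j\<in>A. (1 - l j) * u j $ k)\<bar> \<le> (\<Sum>j\<in>A. \<bar>(1 - l j) * u j $ k\<bar>)" by (rule sum_abs)
        also have "\<dots> \<le> (\<Sum>j\<in>A. (1 - l j) * w)"
        proof (intro sum_mono)
          fix j assume "j \<in> A"
          then have "0 \<le> 1 - l j" "\<bar>u j $ k\<bar> \<le> w" using l(1) bnd AD by auto
          then show "\<bar>(1 - l j) * u j $ k\<bar> \<le> (1 - l j) * w" by (simp add: abs_mult mult_left_mono)
        qed
        also have "\<dots> = (real (card A) - (\<Sum>j\<in>A. l j)) * w" by (simp add: sum_distrib_right[symmetric] sum_subtractf)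
        also have "\<dots> = real m * w" using l(2) by simp
        finally show "\<bar>(\<Sum>j\<in>A. u j) $ k - c * r$k\<bar> \<le> real m * w" using e by simp
      qed
      then show ?thesis using intq c0 c1 unfolding T_def m_def by blast
    qed
  qed
  have ind: "\<And>A. A \<subseteq> D \<Longrightarrow> card A = k \<Longrightarrow> (card A \<le> m \<or> good A) \<Longrightarrow>
     (\<exists>f. (\<forall>j\<le>k. f j \<subseteq> A \<and> card (f j) = j \<and> (\<Sum>i\<in>f j. u i) \<in> T) \<and> (\<forall>j j'. j \<le> j' \<longrightarrow> j' \<le> k \<longrightarrow> f j \<subseteq> f j'))" for k
  proof (induction k)
    case 0
    then have "A = {}" using fin finite_subset by fastforce
    then show ?case using sumT[of "{}"] by (intro exI[of _ "\<lambda>_. {}"]) auto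
  next
    case (Suc k)
    have finA: "finite A" using Suc.prems(1) fin finite_subset by blast
    obtain i where iA: "i \<in> A" and red: "card (A - {i}) \<le> m \<or> good (A - {i})"
    proof (cases "k \<le> m")
      case True
      obtain i where "i \<in> A" using Suc.prems(2) by (metis card.empty ex_in_conv nat.simps(3))
      then show ?thesis using that True Suc.prems(2) finA by simp
    next
      case False
      then have "good A" using Suc.prems(2,3) by simp
      then obtain l where l: "\<forall>i\<in>A. 0 \<le> l i \<and> l i \<le> 1" "(\<Sum>i\<in>A. l i) = real (card A) - real m"
        "(\<Sum>i\<in>A. l i *\<^sub>R u i) = ((real (card A) - real m) / real t) *\<^sub>R r"
        unfolding good_def by blast
      define a where "a = (real k - real m) / (real (Suc k) - real m)"
      have a01: "0 \<le> a" "a \<le> 1" using False by (auto simp: a_def divide_le_eq)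
      define l0 where "l0 i = a * l i" for i
      have f1: "\<forall>i\<in>A. 0 \<le> l0 i \<and> l0 i \<le> 1" using l(1) a01 by (auto simp: l0_def mult_le_one)
      have f2: "(\<Sum>i\<in>A. l0 i) = real k - real m"
      proof -
        have "(\<Sum>i\<in>A. l0 i) = a * (\<Sum>i\<in>A. l i)" by (simp add: l0_def sum_distrib_left)
        also have "\<dots> = a * (real (Suc k) - real m)" using l(2) Suc.prems(2) by simp
        also have "\<dots> = real k - real m" using False by (simp add: a_def)
        finally show ?thesis .
      qed
      have f3: "(\<Sum>i\<in>A. l0 i *\<^sub>R u i) = ((real k - real m) / real t) *\<^sub>R r"
      proof -
        have "(\<Sum>i\<in>A. l0 i *\<^sub>R u i) = a *\<^sub>R (\<Sum>i\<in>A. l i *\<^sub>R u i)"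
          by (simp add: l0_def scaleR_sum_right)
        also have "\<dots> = ((real k - real m) / real t) *\<^sub>R r"
          using l(3) Suc.prems(2) False by (simp add: a_def)
        finally show ?thesis .
      qed
      have sle: "(real k - real m) + real CARD('m) + 1 \<le> real (card A)" using Suc.prems(2) by (simp add: m_def)
      obtain l' where l': "\<forall>i\<in>A. 0 \<le> l' i \<and> l' i \<le> 1" "(\<Sum>i\<in>A. l' i) = real k - real m"
        "(\<Sum>i\<in>A. l' i *\<^sub>R u i) = ((real k - real m) / real t) *\<^sub>R r" "\<exists>i\<in>A. l' i = 0"
        using vertex_zero[OF finA f1 f2 f3 sle] by blast
      then obtain i where i: "i \<in> A" "l' i = 0" by blast
      have cAi: "card (A - {i}) = k" using i Suc.prems(2) finA by simp
      have "(\<Sum>j\<in>A - {i}. l' j) = real k - real m"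
        using l'(2) sum.remove[OF finA i(1), of l'] i(2) by simp
      moreover have "(\<Sum>j\<in>A - {i}. l' j *\<^sub>R u j) = ((real k - real m) / real t) *\<^sub>R r"
        using l'(3) sum.remove[OF finA i(1), of "\<lambda>j. l' j *\<^sub>R u j"] i(2) by simp
      ultimately have "good (A - {i})" unfolding good_def using cAi l'(1) Suc.prems(1) by auto
      then show ?thesis using that i(1) by blast
    qed
    have cAi: "card (A - {i}) = k" using iA Suc.prems(2) finA by simp
    obtain f where f: "\<forall>j\<le>k. f j \<subseteq> A - {i} \<and> card (f j) = j \<and> (\<Sum>i\<in>f j. u i) \<in> T"
        "\<forall>j j'. j \<le> j' \<longrightarrow> j' \<le> k \<longrightarrow> f j \<subseteq> f j'"
    proof -
      have "A - {i} \<subseteq> D" using Suc.prems(1) by blast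
      then show ?thesis using Suc.IH[of "A - {i}"] cAi red that by blast
    qed
    define f' where "f' j = (if j \<le> k then f j else A)" for j
    have AT: "(\<Sum>i\<in>A. u i) \<in> T" using sumT Suc.prems by blast
    show ?case
    proof (intro exI[of _ f'] conjI allI impI)
      fix j assume j: "j \<le> Suc k"
      show "f' j \<subseteq> A" using f(1) j by (auto simp: f'_def)
      show "card (f' j) = j" using f(1) j Suc.prems(2) by (auto simp: f'_def)
      show "(\<Sum>i\<in>f' j. u i) \<in> T" using f(1) j AT by (auto simp: f'_def)
    next
      fix j j' assume "j \<le> j'" "j' \<le> Suc k"
      then show "f' j \<subseteq> f' j'" using f by (auto simp: f'_def)
    qed
  qed
  have startD: "card D \<le> m \<or> good D"
  proof (cases "card D \<le> m")
    case False
    define a where "a = (real t - real m) / real t"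
    have a01: "0 \<le> a" "a \<le> 1" using False by (auto simp: a_def t_def divide_le_eq)
    have "(\<Sum>i\<in>D. a) = real (card D) - real m" using False by (simp add: a_def t_def)
    moreover have "(\<Sum>i\<in>D. a *\<^sub>R u i) = ((real (card D) - real m) / real t) *\<^sub>R r"
      by (simp add: r a_def t_def scaleR_sum_right)
    ultimately have "good D" unfolding good_def using a01 by (intro conjI exI[of _ "\<lambda>_. a"]) auto
    then show ?thesis by simp
  qed simp
  obtain f where f: "\<forall>j\<le>t. f j \<subseteq> D \<and> card (f j) = j \<and> (\<Sum>i\<in>f j. u i) \<in> T"
        "\<forall>j j'. j \<le> j' \<longrightarrow> j' \<le> t \<longrightarrow> f j \<subseteq> f j'"
    using ind[of D t] startD by (auto simp: t_def)
  define h where "h j = (\<Sum>i\<in>f j. u i)" for j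
  have neq: "h j \<noteq> h j'" if jj: "j < j'" "j' \<le> t" for j j'
  proof -
    have sub: "f j \<subseteq> f j'" using f(2) jj by simp
    have finj': "finite (f j')" using f(1) jj fin finite_subset by blast
    have B1: "f j' - f j \<subseteq> D" using f(1) jj by auto
    have cj: "card (f j) = j" "card (f j') = j'" using f(1) jj by auto
    have B2: "f j' - f j \<noteq> {}"
    proof
      assume "f j' - f j = {}"
      then have "f j' = f j" using sub by blast
      then show False using cj jj by simp
    qed
    note B = B1 B2
    have "h j' = h j + (\<Sum>i\<in>f j' - f j. u i)"
      unfolding h_def using sum.subset_diff[OF sub finj'] by (simp add: add.commute)
    then show ?thesis using zsf B by auto
  qed
  have inj: "inj_on h {..t}"
  proof (rule inj_onI)
    fix x y assume xy: "x \<in> {..t}" "y \<in> {..t}" "h x = h y"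
    show "x = y"
    proof (rule ccontr)
      assume "x \<noteq> y"
      then have "x < y \<or> y < x" by arith
      then show False using neq xy by (metis atMost_iff)
    qed
  qed
  have "h ` {..t} \<subseteq> T" using f(1) by (auto simp: h_def)
  then have "card {..t} \<le> card T" using card_inj_on_le[OF inj] finT T_def by blast
  then show ?thesis by (simp add: T_def t_def)
qed



lemma box_count:
  fixes S :: "'m::finite \<Rightarrow> real set"
  assumes "\<And>k. finite (S k)"
  shows "finite {q::real^'m. \<forall>k. q$k \<in> S k} \<and> card {q::real^'m. \<forall>k. q$k \<in> S k} \<le> (\<Prod>k\<in>UNIV. card (S k))"
proof -
  have sub: "{q::real^'m. \<forall>k. q$k \<in> S k} \<subseteq> (\<lambda>f. \<chi> k. f k) ` (PiE UNIV S)"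
  proof
    fix q :: "real^'m" assume "q \<in> {q. \<forall>k. q$k \<in> S k}"
    then have "(\<lambda>k. q$k) \<in> PiE UNIV S" by auto
    moreover have "q = (\<chi> k. (\<lambda>k. q$k) k)" by simp
    ultimately show "q \<in> (\<lambda>f. \<chi> k. f k) ` (PiE UNIV S)" by blast
  qed
  have fin: "finite (PiE UNIV S)" using assms by (simp add: finite_PiE)
  have "card ((\<lambda>f. \<chi> k. f k) ` (PiE UNIV S)) \<le> card (PiE UNIV S)" using fin by (rule card_image_le)
  also have "\<dots> = (\<Prod>k\<in>UNIV. card (S k))" by (simp add: card_PiE)
  finally show ?thesis using sub fin finite_subset card_mono
    by (metis (no_types, lifting) finite_imageI order_trans)
qed

lemma int_interval_count:
  fixes x :: real and N :: nat
  shows "finite (\<int> \<inter> {x - real N..x + real N}) \<and> card (\<int> \<inter> {x - real N..x + real N}) \<le> 2*N+1"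
proof -
  have sub: "\<int> \<inter> {x - real N..x + real N} \<subseteq> real_of_int ` {\<lceil>x - real N\<rceil>..\<lfloor>x + real N\<rfloor>}"
  proof
    fix y assume "y \<in> \<int> \<inter> {x - real N..x + real N}"
    then obtain z where z: "y = real_of_int z" "x - real N \<le> real_of_int z" "real_of_int z \<le> x + real N"
      by (auto elim!: Ints_cases)
    have "\<lceil>x - real N\<rceil> \<le> z" using z(2) by (simp add: ceiling_le)
    moreover have "z \<le> \<lfloor>x + real N\<rfloor>" using z(3) by (simp only: le_floor_iff)
    ultimately have "z \<in> {\<lceil>x - real N\<rceil>..\<lfloor>x + real N\<rfloor>}" by simp
    then show "y \<in> real_of_int ` {\<lceil>x - real N\<rceil>..\<lfloor>x + real N\<rfloor>}" using z by blast
  qed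
  have "card (real_of_int ` {\<lceil>x - real N\<rceil>..\<lfloor>x + real N\<rfloor>}) \<le> card {\<lceil>x - real N\<rceil>..\<lfloor>x + real N\<rfloor>}"
    by (rule card_image_le) simp
  also have "\<dots> = nat (\<lfloor>x + real N\<rfloor> + 1 - \<lceil>x - real N\<rceil>)" by simp
  also have "\<dots> \<le> 2*N+1"
  proof -
    have a: "\<lfloor>x + real N\<rfloor> = \<lfloor>x\<rfloor> + int N" by (metis floor_add_int of_int_of_nat_eq)
    have b: "\<lceil>x - real N\<rceil> = \<lceil>x\<rceil> - int N" by (metis ceiling_diff_of_int of_int_of_nat_eq)
    have "\<lfloor>x\<rfloor> \<le> \<lceil>x\<rceil>" by (meson floor_le_ceiling)
    then show ?thesis using a b by linarith
  qed
  finally show ?thesis using sub by (meson card_mono finite_atLeastAtMost_int finite_imageI finite_subset order_trans)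
qed

lemma prod_if_one:
  fixes c :: nat and i :: "'m::finite"
  shows "(\<Prod>k\<in>UNIV. (if k = i then 1 else c)) = c ^ (CARD('m) - 1)"
proof -
  have "(\<Prod>k\<in>UNIV. (if k = i then 1 else c)) = (if i = i then 1 else c) * (\<Prod>k\<in>UNIV - {i}. (if k = i then 1 else c))"
    by (rule prod.remove) auto
  also have "\<dots> = (\<Prod>k\<in>UNIV - {i}. c)"
  proof -
    have "(\<Prod>k\<in>UNIV - {i}. (if k = i then 1 else c)) = (\<Prod>k\<in>UNIV - {i}. c)"
      by (rule prod.cong) auto
    then show ?thesis by simp
  qed
  also have "\<dots> = c ^ (CARD('m) - 1)" by (simp add: card_Diff_singleton)
  finally show ?thesis .
qed

lemma tube_count:
  fixes r :: "real^'m" and N :: nat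
  assumes rint: "\<forall>k. r$k \<in> \<int>"
  shows "finite {q::real^'m. (\<forall>k. q$k \<in> \<int>) \<and> (\<exists>c. 0 \<le> c \<and> c \<le> 1 \<and> (\<forall>k. \<bar>q$k - c * r$k\<bar> \<le> real N))} \<and>
     real (card {q::real^'m. (\<forall>k. q$k \<in> \<int>) \<and> (\<exists>c. 0 \<le> c \<and> c \<le> 1 \<and> (\<forall>k. \<bar>q$k - c * r$k\<bar> \<le> real N))})
       \<le> (2 * real N + 1) ^ CARD('m) + norm1 r * (2 * real N + 1) ^ (CARD('m) - 1)"
proof -
  define T where "T = {q::real^'m. (\<forall>k. q$k \<in> \<int>) \<and> (\<exists>c. 0 \<le> c \<and> c \<le> 1 \<and> (\<forall>k. \<bar>q$k - c * r$k\<bar> \<le> real N))}"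
  define S0 where "S0 k = \<int> \<inter> {0 - real N..0 + real N}" for k :: 'm
  define T0 where "T0 = {q::real^'m. \<forall>k. q$k \<in> S0 k}"
  define Sp where "Sp i b k = (if k = i then {real b / \<bar>r$i\<bar> * r$i + real N * sgn (r$i)}
       else \<int> \<inter> {real b / \<bar>r$i\<bar> * r$k - real N..real b / \<bar>r$i\<bar> * r$k + real N})" for i b k
  define Pc where "Pc i b = {q::real^'m. \<forall>k. q$k \<in> Sp i b k}" for i b
  define Bi where "Bi i = {1..nat \<lfloor>\<bar>r$i\<bar>\<rfloor>}" for i
  have T0c: "finite T0 \<and> card T0 \<le> (2*N+1) ^ CARD('m)"
  proof -
    have "finite T0 \<and> card T0 \<le> (\<Prod>k\<in>UNIV. card (S0 k))"
      unfolding T0_def by (rule box_count) (simp add: S0_def int_interval_count[of 0 N, simplified])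
    moreover have "(\<Prod>k\<in>UNIV. card (S0 k)) \<le> (\<Prod>k\<in>(UNIV::'m set). 2*N+1)"
      by (intro prod_mono) (simp add: S0_def int_interval_count[of 0 N, simplified])
    ultimately show ?thesis by simp
  qed
  have Pcc: "finite (Pc i b) \<and> card (Pc i b) \<le> (2*N+1) ^ (CARD('m) - 1)" for i b
  proof -
    have fS: "finite (Sp i b k) \<and> card (Sp i b k) \<le> (if k = i then 1 else 2*N+1)" for k
      using int_interval_count[of "real b / \<bar>r$i\<bar> * r$k" N] by (simp add: Sp_def)
    have "finite (Pc i b) \<and> card (Pc i b) \<le> (\<Prod>k\<in>UNIV. card (Sp i b k))"
      unfolding Pc_def by (rule box_count) (use fS in blast)
    moreover have "(\<Prod>k\<in>UNIV. card (Sp i b k)) \<le> (\<Prod>k\<in>UNIV. (if k = i then 1 else 2*N+1))"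
      by (intro prod_mono) (use fS in blast)
    ultimately show ?thesis by (simp add: prod_if_one)
  qed
  have sub: "T \<subseteq> T0 \<union> (\<Union>i. \<Union>b\<in>Bi i. Pc i b)"
  proof
    fix q assume "q \<in> T"
    then obtain c where qi: "\<forall>k. q$k \<in> \<int>" and c: "0 \<le> c" "c \<le> 1" "\<forall>k. \<bar>q$k - c * r$k\<bar> \<le> real N"
      unfolding T_def by blast
    define Lo where "Lo k = (if r$k = 0 then 0 else (q$k - real N * sgn (r$k)) / r$k)" for k
    define c' where "c' = Max (insert 0 (range Lo))"
    have fin: "finite (insert 0 (range Lo))" by simp
    have Loc: "Lo k \<le> c" for k
    proof (cases "r$k = 0")
      case True then show ?thesis using c by (simp add: Lo_def)
    next
      case False
      show ?thesis
      proof (cases "r$k > 0")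
        case True
        then show ?thesis using c(3)[rule_format, of k] by (simp add: Lo_def divide_le_eq algebra_simps abs_le_iff)
      next
        case False
        then have "r$k < 0" using \<open>r$k \<noteq> 0\<close> by simp
        then show ?thesis using c(3)[rule_format, of k] by (simp add: Lo_def divide_le_eq algebra_simps abs_le_iff)
      qed
    qed
    have c'c: "c' \<le> c" unfolding c'_def using fin c Loc by (auto simp: Max_le_iff)
    have c'0: "0 \<le> c'" unfolding c'_def using fin by (simp add: Max_ge_iff)
    have c'L: "Lo k \<le> c'" for k unfolding c'_def using fin by (intro Max_ge) auto
    have bnd': "\<bar>q$k - c' * r$k\<bar> \<le> real N" for k
    proof (cases "r$k = 0")
      case True then show ?thesis using c(3)[rule_format, of k] by simp
    next
      case False
      show ?thesis
      proof (cases "r$k > 0")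
        case True
        have "c' * r$k \<le> c * r$k" using c'c True by (simp add: mult_right_mono)
        moreover have "q$k - real N \<le> c' * r$k" using c'L[of k] True by (simp add: Lo_def divide_le_eq)
        ultimately show ?thesis using c(3)[rule_format, of k] by (simp add: abs_le_iff)
      next
        case False
        then have neg: "r$k < 0" using \<open>r$k \<noteq> 0\<close> by simp
        have "c' * r$k \<ge> c * r$k" using c'c neg by (simp add: mult_right_mono_neg)
        moreover have "q$k + real N \<ge> c' * r$k" using c'L[of k] neg by (simp add: Lo_def divide_le_eq)
        ultimately show ?thesis using c(3)[rule_format, of k] by (simp add: abs_le_iff)
      qed
    qed
    show "q \<in> T0 \<union> (\<Union>i. \<Union>b\<in>Bi i. Pc i b)"
    proof (cases "c' = 0")
      case True
      have "- real N \<le> q$k \<and> q$k \<le> real N" for k using bnd'[of k] True by (simp add: abs_le_iff)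
      then have "q \<in> T0" using qi by (auto simp: T0_def S0_def)
      then show ?thesis by blast
    next
      case False
      have "c' \<in> insert 0 (range Lo)" unfolding c'_def using fin by (rule Max_in) simp
      then obtain i where ci: "c' = Lo i" using False by auto
      then have ri: "r$i \<noteq> 0" using False by (auto simp: Lo_def)
      have cri: "c' * r$i = q$i - real N * sgn (r$i)" using ci ri by (simp add: Lo_def)
      have bI: "c' * \<bar>r$i\<bar> \<in> \<int>"
      proof -
        have "c' * \<bar>r$i\<bar> = (q$i - real N * sgn (r$i)) * sgn (r$i)"
          using cri ri by (cases "r$i > 0") (auto simp: abs_if algebra_simps)
        moreover have "sgn (r$i) \<in> \<int>" using ri by (cases "r$i > 0") auto
        ultimately show ?thesis using qi by (metis Ints_diff Ints_mult Ints_of_nat)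
      qed
      have bpos: "0 < c' * \<bar>r$i\<bar>" using False c'0 ri by simp
      have ble: "c' * \<bar>r$i\<bar> \<le> \<bar>r$i\<bar>" using c'c c(2) c'0 by (intro mult_left_le_one_le) auto
      obtain z where z: "c' * \<bar>r$i\<bar> = real_of_int z" using bI by (auto elim: Ints_cases)
      define bn where "bn = nat z"
      have zpos: "0 < z" using z bpos by simp
      have bnr: "real bn = c' * \<bar>r$i\<bar>" using z zpos unfolding bn_def by simp
      have bnB: "bn \<in> Bi i"
      proof -
        have "1 \<le> bn" using zpos unfolding bn_def by simp
        moreover have "z \<le> \<lfloor>\<bar>r$i\<bar>\<rfloor>" using ble z by (simp add: le_floor_iff)
        then have "bn \<le> nat \<lfloor>\<bar>r$i\<bar>\<rfloor>" unfolding bn_def by simp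
        ultimately show ?thesis by (simp add: Bi_def)
      qed
      have cb: "real bn / \<bar>r$i\<bar> = c'" using bnr ri by simp
      have bb: "c' * r$k - real N \<le> q$k \<and> q$k \<le> c' * r$k + real N" for k
        using bnd'[of k] by (simp add: abs_le_iff)
      have "q \<in> Pc i bn"
        unfolding Pc_def Sp_def cb using cri qi bb by auto
      then show ?thesis using bnB by blast
    qed
  qed
  have finU: "finite (\<Union>i. \<Union>b\<in>Bi i. Pc i b)" using Pcc by (simp add: Bi_def)
  have finT: "finite T" using sub finU T0c finite_subset by blast
  have "card T \<le> card (T0 \<union> (\<Union>i. \<Union>b\<in>Bi i. Pc i b))" using sub finU T0c by (simp add: card_mono)
  also have "\<dots> \<le> card T0 + card (\<Union>i. \<Union>b\<in>Bi i. Pc i b)" by (rule card_Un_le)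
  also have "card (\<Union>i. \<Union>b\<in>Bi i. Pc i b) \<le> (\<Sum>i\<in>UNIV. card (\<Union>b\<in>Bi i. Pc i b))" by (rule card_UN_le) simp
  also have "\<dots> \<le> (\<Sum>i\<in>UNIV. \<Sum>b\<in>Bi i. card (Pc i b))" by (intro sum_mono card_UN_le) (simp add: Bi_def)
  also have "\<dots> \<le> (\<Sum>i\<in>UNIV. \<Sum>b\<in>Bi i. (2*N+1) ^ (CARD('m) - 1))" by (intro sum_mono) (use Pcc in blast)
  also have "\<dots> = (\<Sum>i\<in>UNIV. nat \<lfloor>\<bar>r$i\<bar>\<rfloor> * (2*N+1) ^ (CARD('m) - 1))" by (simp add: Bi_def)
  finally have cT: "card T \<le> card T0 + (\<Sum>i\<in>UNIV. nat \<lfloor>\<bar>r$i\<bar>\<rfloor> * (2*N+1) ^ (CARD('m) - 1))" by simp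
  have rr: "real (nat \<lfloor>\<bar>r$i\<bar>\<rfloor>) = \<bar>r$i\<bar>" for i
  proof -
    have "\<bar>r$i\<bar> \<in> \<int>" using rint by simp
    then obtain z where z: "\<bar>r$i\<bar> = real_of_int z" by (auto elim: Ints_cases)
    then have "0 \<le> z" by (metis abs_ge_zero of_int_0_le_iff)
    then show ?thesis using z by simp
  qed
  have "real (card T) \<le> real (card T0 + (\<Sum>i\<in>UNIV. nat \<lfloor>\<bar>r$i\<bar>\<rfloor> * (2*N+1) ^ (CARD('m) - 1)))"
    using cT by (simp only: of_nat_le_iff)
  also have "\<dots> = real (card T0) + (\<Sum>i\<in>UNIV. real (nat \<lfloor>\<bar>r$i\<bar>\<rfloor>) * (2 * real N + 1) ^ (CARD('m) - 1))"
    by (simp add: of_nat_sum add.commute)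
  also have "\<dots> = real (card T0) + norm1 r * (2 * real N + 1) ^ (CARD('m) - 1)"
    by (simp add: rr norm1_def sum_distrib_right)
  also have "real (card T0) \<le> (2 * real N + 1) ^ CARD('m)"
  proof -
    have "real (card T0) \<le> real ((2*N+1) ^ CARD('m))" using T0c by (simp only: of_nat_le_iff)
    then show ?thesis by (simp add: add.commute)
  qed
  finally show ?thesis using finT unfolding T_def by simp
qed



lemma norminf_ge: "\<bar>x $ i\<bar> \<le> norminf x"
  unfolding norminf_def by (rule Max_ge) auto

lemma norminf_nonneg: "0 \<le> norminf x"
  using norminf_ge[of x] abs_ge_zero order_trans by blast

lemma norm1_nonneg: "0 \<le> norm1 x"
  unfolding norm1_def by (simp add: sum_nonneg)

lemma inner_le_norms: "(a::real^'m) \<bullet> b \<le> norminf a * norm1 b"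
proof -
  have "a \<bullet> b = (\<Sum>i\<in>UNIV. a$i * b$i)" by (simp add: inner_vec_def)
  also have "\<dots> \<le> (\<Sum>i\<in>UNIV. norminf a * \<bar>b$i\<bar>)"
  proof (rule sum_mono)
    fix i
    have "a$i * b$i \<le> \<bar>a$i\<bar> * \<bar>b$i\<bar>" by (metis abs_ge_self abs_mult)
    also have "\<dots> \<le> norminf a * \<bar>b$i\<bar>" by (intro mult_right_mono norminf_ge) auto
    finally show "a$i * b$i \<le> norminf a * \<bar>b$i\<bar>" .
  qed
  also have "\<dots> = norminf a * norm1 b" by (simp add: norm1_def sum_distrib_left)
  finally show ?thesis .
qed

lemma norm1_add: "norm1 (x + y) \<le> norm1 x + norm1 y"
  unfolding norm1_def by (simp add: sum.distrib[symmetric] sum_mono abs_triangle_ineq)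

lemma norm1_minus_commute: "norm1 (x - y) = norm1 (y - x)"
  unfolding norm1_def by (simp add: abs_minus_commute)

lemma norm1_scaleR: "norm1 (c *\<^sub>R x) = \<bar>c\<bar> * norm1 x"
  unfolding norm1_def by (simp add: abs_mult sum_distrib_left)

lemma norm1_sum: "finite S \<Longrightarrow> norm1 (\<Sum>j\<in>S. f j) \<le> (\<Sum>j\<in>S. norm1 (f j))"
proof (induction S rule: finite_induct)
  case empty then show ?case by (simp add: norm1_def)
next
  case (insert x F)
  then show ?case using norm1_add[of "f x" "sum f F"] by simp
qed

lemma norm1_zero_iff: "norm1 x = 0 \<longleftrightarrow> x = 0"
  unfolding norm1_def by (simp add: sum_nonneg_eq_0_iff vec_eq_iff)

definition col :: "int ^ 'n ^ 'm \<Rightarrow> 'n \<Rightarrow> real ^ 'm" where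
  "col W j = (\<chi> i. real_of_int (W $ i $ j))"

lemma mv_cols: "realmat W *v x = (\<Sum>j\<in>UNIV. x$j *\<^sub>R col W j)"
  by (simp add: vec_eq_iff matrix_vector_mult_def realmat_def col_def mult.commute)

lemma mv_axis: "realmat W *v axis j 1 = col W j"
proof -
  have "realmat W *v axis j 1 = (\<Sum>k\<in>UNIV. (axis j 1 :: real^_)$k *\<^sub>R col W k)" by (rule mv_cols)
  also have "\<dots> = (\<Sum>k\<in>UNIV. (if k = j then col W k else 0))"
    by (intro sum.cong) (auto simp: axis_def)
  also have "\<dots> = col W j" by simp
  finally show ?thesis .
qed

lemma mv_lin: "realmat W *v (x + y) = realmat W *v x + realmat W *v y"
  "realmat W *v (x - y) = realmat W *v x - realmat W *v y"
  "realmat W *v (c *\<^sub>R x) = c *\<^sub>R (realmat W *v x)"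
  by (simp_all add: matrix_vector_right_distrib matrix_vector_mult_diff_distrib matrix_vector_mult_scaleR)

lemma matinf_props:
  fixes W :: "int ^ 'n ^ 'm"
  obtains wn :: nat where "matinf W = real wn" "\<And>i j. \<bar>W $ i $ j\<bar> \<le> int wn"
    "wn \<noteq> 0 \<Longrightarrow> \<exists>i j. W $ i $ j \<noteq> 0"
proof -
  define S where "S = {real_of_int \<bar>W $ i $ j\<bar> | i j. True}"
  have S: "S = (\<lambda>(i,j). real_of_int \<bar>W $ i $ j\<bar>) ` UNIV" unfolding S_def by auto
  have fin: "finite S" "S \<noteq> {}" using S by auto
  have "matinf W \<in> S" unfolding matinf_def S_def[symmetric] using fin by (rule Max_in)
  then obtain i0 j0 where ij: "matinf W = real_of_int \<bar>W $ i0 $ j0\<bar>" unfolding S_def by auto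
  define wn where "wn = nat \<bar>W $ i0 $ j0\<bar>"
  have 1: "matinf W = real wn" using ij by (simp add: wn_def)
  have 2: "\<bar>W $ i $ j\<bar> \<le> int wn" for i j
  proof -
    have "real_of_int \<bar>W $ i $ j\<bar> \<le> matinf W" unfolding matinf_def S_def[symmetric]
      using fin by (intro Max_ge) (auto simp: S_def)
    then show ?thesis using 1 by simp
  qed
  have 3: "\<exists>i j. W $ i $ j \<noteq> 0" if "wn \<noteq> 0" using that by (auto simp: wn_def)
  show ?thesis using that 1 2 3 by blast
qed

lemma norm1_col:
  fixes W :: "int ^ 'n ^ 'm"
  shows "\<forall>i j. \<bar>W $ i $ j\<bar> \<le> int wn \<Longrightarrow> norm1 (col W j) \<le> real CARD('m) * real wn"
proof -
  assume h: "\<forall>i j. \<bar>W $ i $ j\<bar> \<le> int wn"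
  have "norm1 (col W j) = (\<Sum>i\<in>(UNIV::'m set). real_of_int \<bar>W $ i $ j\<bar>)" by (simp add: norm1_def col_def)
  also have "\<dots> \<le> (\<Sum>i\<in>(UNIV::'m set). real wn)" using h by (intro sum_mono) (metis of_int_le_iff of_int_of_nat_eq)
  finally show ?thesis by simp
qed



lemma box_comb:
  assumes "a \<in> unit_box" "b \<in> unit_box" "0 \<le> s" "s \<le> 1"
  shows "a + s *\<^sub>R (b - a) \<in> unit_box"
proof -
  have "0 \<le> a$i + s * (b$i - a$i) \<and> a$i + s * (b$i - a$i) \<le> 1" for i
  proof -
    have h: "0 \<le> a$i" "a$i \<le> 1" "0 \<le> b$i" "b$i \<le> 1" using assms(1,2) by (auto simp: unit_box_def)
    have "a$i + s * (b$i - a$i) = (1 - s) * a$i + s * b$i" by (simp add: algebra_simps)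
    moreover have "0 \<le> (1 - s) * a$i + s * b$i" using h assms by simp
    moreover have "(1 - s) * a$i + s * b$i \<le> (1 - s) * 1 + s * 1"
      using h assms by (intro add_mono mult_left_mono) auto
    ultimately show ?thesis by simp
  qed
  then show ?thesis by (simp add: unit_box_def)
qed

lemma deriv_zero:
  fixes W :: "int ^ 'n ^ 'm" and g :: "real ^ 'm \<Rightarrow> real" and g' :: "real ^ 'm \<Rightarrow> real ^ 'm"
  assumes Pdef: "P = {realmat W *v x | x. x \<in> unit_box}"
    and grad: "\<And>u. u \<in> P \<Longrightarrow> (g has_derivative (\<lambda>h. g' u \<bullet> h)) (at u within P)"
    and xs: "xs \<in> unit_box" and min: "\<forall>y\<in>unit_box. g (realmat W *v xs) \<le> g (realmat W *v y)"
    and j: "0 < xs$j" "xs$j < 1"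
  shows "g' (realmat W *v xs) \<bullet> col W j = 0"
proof -
  define \<epsilon> where "\<epsilon> = min (xs$j) (1 - xs$j)"
  have \<epsilon>0: "0 < \<epsilon>" using j by (simp add: \<epsilon>_def)
  define e where "e = (axis j (1::real) :: real^'n)"
  define f where "f t = realmat W *v xs + t *\<^sub>R col W j" for t
  have inbox: "xs + t *\<^sub>R e \<in> unit_box" if "\<bar>t\<bar> < \<epsilon>" for t
  proof -
    have h: "0 \<le> xs$k \<and> xs$k \<le> 1" for k using xs by (simp add: unit_box_def)
    have "0 \<le> xs$k + t * e$k \<and> xs$k + t * e$k \<le> 1" for k
    proof (cases "k = j")
      case True
      then show ?thesis using that by (simp add: e_def \<epsilon>_def abs_less_iff)
    next
      case False
      then show ?thesis using h[of k] by (simp add: e_def axis_def)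
    qed
    then show ?thesis by (simp add: unit_box_def)
  qed
  have fe: "f t = realmat W *v (xs + t *\<^sub>R e)" for t
    by (simp add: f_def mv_lin e_def mv_axis)
  define S where "S = {-\<epsilon><..<\<epsilon>}"
  have fS: "f ` S \<subseteq> P"
  proof
    fix y assume "y \<in> f ` S"
    then obtain t where t: "t \<in> S" "y = f t" by blast
    then have "\<bar>t\<bar> < \<epsilon>" by (simp add: S_def abs_less_iff)
    then show "y \<in> P" using inbox fe t Pdef by blast
  qed
  have S0: "0 \<in> S" using \<epsilon>0 by (simp add: S_def)
  have df: "(f has_derivative (\<lambda>h. h *\<^sub>R col W j)) (at 0 within S)"
    unfolding f_def by (auto intro!: derivative_eq_intros)
  have "((\<lambda>t. g (f t)) has_derivative (\<lambda>h. g' (f 0) \<bullet> (h *\<^sub>R col W j))) (at 0 within S)"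
    by (rule has_derivative_in_compose2[OF grad fS S0 df])
  moreover have "at 0 within S = at 0" using S0 by (intro at_within_open) (auto simp: S_def)
  moreover have "(\<lambda>h. g' (f 0) \<bullet> (h *\<^sub>R col W j)) = (\<lambda>h. (g' (realmat W *v xs) \<bullet> col W j) * h)"
    by (simp add: f_def fun_eq_iff mult.commute)
  ultimately have "((\<lambda>t. g (f t)) has_field_derivative (g' (realmat W *v xs) \<bullet> col W j)) (at 0)"
    by (simp add: has_field_derivative_def)
  moreover have "\<forall>y. \<bar>0 - y\<bar> < \<epsilon> \<longrightarrow> g (f 0) \<le> g (f y)"
  proof (intro allI impI)
    fix y assume "\<bar>0 - y\<bar> < \<epsilon>"
    then have "xs + y *\<^sub>R e \<in> unit_box" using inbox by simp
    then show "g (f 0) \<le> g (f y)" using min fe[of y] by (simp add: f_def)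
  qed
  ultimately show ?thesis by (rule DERIV_local_min[OF _ \<epsilon>0])
qed

lemma mvt_bound:
  fixes W :: "int ^ 'n ^ 'm" and g :: "real ^ 'm \<Rightarrow> real" and g' :: "real ^ 'm \<Rightarrow> real ^ 'm"
  assumes Pdef: "P = {realmat W *v x | x. x \<in> unit_box}"
    and grad: "\<And>u. u \<in> P \<Longrightarrow> (g has_derivative (\<lambda>h. g' u \<bullet> h)) (at u within P)"
    and lipschitz: "\<And>u v. u \<in> P \<Longrightarrow> v \<in> P \<Longrightarrow> norminf (g' u - g' v) \<le> L * norm1 (u - v)"
    and L0: "0 \<le> L"
    and a: "a \<in> unit_box" and b: "b \<in> unit_box"
  shows "g (realmat W *v b) - g (realmat W *v a) \<le> g' (realmat W *v a) \<bullet> (realmat W *v b - realmat W *v a)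
            + L * (norm1 (realmat W *v b - realmat W *v a))\<^sup>2"
proof -
  define d where "d = realmat W *v b - realmat W *v a"
  define \<gamma> where "\<gamma> s = realmat W *v a + s *\<^sub>R d" for s
  have \<gamma>e: "\<gamma> s = realmat W *v (a + s *\<^sub>R (b - a))" for s by (simp add: \<gamma>_def d_def mv_lin)
  have \<gamma>P: "\<gamma> s \<in> P" if "s \<in> {0..1}" for s using \<gamma>e box_comb[OF a b] that Pdef by auto
  have "\<forall>s\<in>{0..1}. ((\<lambda>s. g (\<gamma> s)) has_derivative (\<lambda>h. g' (\<gamma> s) \<bullet> (h *\<^sub>R d))) (at s within {0..1})"
  proof
    fix s :: real assume s: "s \<in> {0..1}"
    have dg: "(\<gamma> has_derivative (\<lambda>h. h *\<^sub>R d)) (at s within {0..1})"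
      unfolding \<gamma>_def by (auto intro!: derivative_eq_intros)
    show "((\<lambda>s. g (\<gamma> s)) has_derivative (\<lambda>h. g' (\<gamma> s) \<bullet> (h *\<^sub>R d))) (at s within {0..1})"
      by (rule has_derivative_in_compose2[OF grad _ s dg]) (use \<gamma>P in auto)
  qed
  then obtain \<xi> where \<xi>: "\<xi> \<in> {0..1}" "g (\<gamma> 1) - g (\<gamma> 0) = g' (\<gamma> \<xi>) \<bullet> ((1 - 0) *\<^sub>R d)"
    using mvt_very_simple[of 0 1 "\<lambda>s. g (\<gamma> s)" "\<lambda>s h. g' (\<gamma> s) \<bullet> (h *\<^sub>R d)"] by auto
  have g1: "g (\<gamma> 1) - g (\<gamma> 0) = (g' (\<gamma> \<xi>) - g' (realmat W *v a)) \<bullet> d + g' (realmat W *v a) \<bullet> d"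
    using \<xi>(2) by (simp add: inner_diff_left)
  have "(g' (\<gamma> \<xi>) - g' (realmat W *v a)) \<bullet> d \<le> norminf (g' (\<gamma> \<xi>) - g' (realmat W *v a)) * norm1 d"
    by (rule inner_le_norms)
  also have "\<dots> \<le> (L * norm1 (\<gamma> \<xi> - realmat W *v a)) * norm1 d"
  proof (intro mult_right_mono lipschitz norm1_nonneg \<gamma>P \<xi>(1))
    show "realmat W *v a \<in> P" using a Pdef by blast
  qed
  also have "\<dots> = L * \<xi> * (norm1 d)\<^sup>2" using \<xi>(1) by (simp add: \<gamma>_def norm1_scaleR power2_eq_square)
  also have "\<dots> \<le> L * 1 * (norm1 d)\<^sup>2" using \<xi>(1) L0 by (intro mult_right_mono mult_left_mono) auto
  finally show ?thesis using g1 by (simp add: \<gamma>_def d_def)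
qed



lemma prox_comb:
  fixes u :: "'i \<Rightarrow> real^'m" and wn :: nat
  assumes fin: "finite D"
   and int: "\<forall>j\<in>D. \<forall>k. u j $ k \<in> \<int>"
   and bnd: "\<forall>j\<in>D. \<forall>k. \<bar>u j $ k\<bar> \<le> real wn"
   and zsf: "\<forall>B. B \<subseteq> D \<longrightarrow> B \<noteq> {} \<longrightarrow> (\<Sum>j\<in>B. u j) \<noteq> 0"
  shows "real (card D) + 1 \<le> (2 * real (CARD('m) * wn) + 1) ^ CARD('m)
            + norm1 (\<Sum>j\<in>D. u j) * (2 * real (CARD('m) * wn) + 1) ^ (CARD('m) - 1)"
proof -
  define r where "r = (\<Sum>j\<in>D. u j)"
  have rint: "\<forall>k. r$k \<in> \<int>" using int by (auto simp: r_def intro: Ints_sum)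
  note tc = tube_count[OF rint, of "CARD('m) * wn"]
  have "card D + 1 \<le> card {q::real^'m. (\<forall>k. q$k \<in> \<int>) \<and> (\<exists>c. 0 \<le> c \<and> c \<le> 1 \<and> (\<forall>k. \<bar>q$k - c * r$k\<bar> \<le> real CARD('m) * real wn))}"
    by (rule chain_bound[OF fin int bnd _ r_def zsf]) (use tc in simp_all)
  then have "real (card D + 1) \<le> real (card {q::real^'m. (\<forall>k. q$k \<in> \<int>) \<and> (\<exists>c. 0 \<le> c \<and> c \<le> 1 \<and> (\<forall>k. \<bar>q$k - c * r$k\<bar> \<le> real (CARD('m) * wn)))})"
    by simp
  then show ?thesis using tc r_def by simp
qed

lemma rpow_nonneg: "0 \<le> rpow x t"
  by (simp add: rpow_def)

lemma rpow_mono: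
  assumes "0 \<le> a" "a \<le> b" "0 \<le> t"
  shows "rpow a t \<le> rpow b t"
proof (cases "a = 0")
  case True
  show ?thesis
  proof (cases "t = 0")
    case True
    then show ?thesis using \<open>a = 0\<close> by (simp add: rpow_def)
  next
    case False
    then show ?thesis using \<open>a = 0\<close> by (simp add: rpow_def)
  qed
next
  case False
  then have "0 < a" "0 < b" using assms by auto
  then show ?thesis using assms by (simp add: rpow_def powr_mono2)
qed



theorem mainTheorem8:
  fixes W :: "int ^ 'n ^ 'm"
    and g :: "real ^ 'm \<Rightarrow> real"
    and g' :: "real ^ 'm \<Rightarrow> real ^ 'm"
    and L \<mu> \<theta> :: real
  defines "P \<equiv> {realmat W *v x | x. x \<in> unit_box}"
  assumes convex: "convex_on P g"
    and grad: "\<And>u. u \<in> P \<Longrightarrow> (g has_derivative (\<lambda>h. g' u \<bullet> h)) (at u within P)"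
    and grad_cont: "continuous_on P g'"
    and lipschitz: "\<And>u v. u \<in> P \<Longrightarrow> v \<in> P \<Longrightarrow> norminf (g' u - g' v) \<le> L * norm1 (u - v)"
    and sharpness: "sharp P g \<mu> \<theta>"
  shows "\<forall>xs. (xs \<in> unit_box \<and> (\<forall>y\<in>unit_box. g (realmat W *v xs) \<le> g (realmat W *v y))
               \<and> card (fractional_entries xs) \<le> CARD('m)) \<longrightarrow>
          (\<exists>zs. zs \<in> binary_points \<and> (\<forall>y\<in>binary_points. g (realmat W *v zs) \<le> g (realmat W *v y))
               \<and> norm1 (xs - zs) \<le>
                 (\<mu> * rpow (real (CARD('m)) ^ 4 * (L / 4) * matinf W ^ 2) \<theta> + real (CARD('m)) + 2)
                 * (2 * real (CARD('m)) * matinf W + 1) ^ CARD('m))"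
proof (intro allI impI)
  fix xs :: "real^'n"
  assume H: "xs \<in> unit_box \<and> (\<forall>y\<in>unit_box. g (realmat W *v xs) \<le> g (realmat W *v y))
               \<and> card (fractional_entries xs) \<le> CARD('m)"
  then have xs: "xs \<in> unit_box" and xmin: "\<forall>y\<in>unit_box. g (realmat W *v xs) \<le> g (realmat W *v y)"
    and cF: "card (fractional_entries xs) \<le> CARD('m)" by auto
  have Pdef: "P = {realmat W *v x | x. x \<in> unit_box}" by (simp add: P_def)
  define F where "F = fractional_entries xs"
  obtain wn where wn: "matinf W = real wn" "\<And>i j. \<bar>W $ i $ j\<bar> \<le> int wn"
    "wn \<noteq> 0 \<Longrightarrow> \<exists>i j. W $ i $ j \<noteq> 0" by (rule matinf_props[of W]) blast
  define M where "M = real CARD('m)"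
  have M1: "1 \<le> M" by (simp add: M_def)
  define X where "X = real (CARD('m)) ^ 4 * (L / 4) * matinf W ^ 2"
  define Y where "Y = rpow X \<theta>"
  obtain v where v: "v \<in> P" "\<forall>u\<in>P. g v \<le> g u" "\<forall>u\<in>P. \<mu> * rpow (g u - g v) \<theta> \<ge> norm1 (u - v)"
    and mu: "0 < \<mu>" and th: "0 \<le> \<theta>" using sharpness by (auto simp: sharp_def)
  have inP: "realmat W *v y \<in> P" if "y \<in> unit_box" for y using that Pdef by blast
  have gxv: "g (realmat W *v xs) = g v"
  proof -
    obtain y0 where "y0 \<in> unit_box" "v = realmat W *v y0" using v(1) Pdef by blast
    then have "g (realmat W *v xs) \<le> g v" using xmin by simp
    moreover have "g v \<le> g (realmat W *v xs)" using v(2) inP xs by blast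
    ultimately show ?thesis by simp
  qed
  have xs01: "0 \<le> xs$j \<and> xs$j \<le> 1" for j using xs by (simp add: unit_box_def)
  have xsF: "j \<notin> F \<Longrightarrow> xs$j = 0 \<or> xs$j = 1" for j by (simp add: F_def fractional_entries_def)
  define z1 where "z1 = (\<chi> j. if xs$j \<ge> 1/2 then (1::real) else 0)"
  have z1b: "z1 \<in> binary_points" by (simp add: z1_def binary_points_def)
  have z1box: "z1 \<in> unit_box" by (simp add: z1_def unit_box_def)
  have z1d: "\<bar>z1$j - xs$j\<bar> \<le> 1/2" for j using xs01[of j] by (simp add: z1_def)
  have z1F: "j \<notin> F \<Longrightarrow> z1$j = xs$j" for j using xsF[of j] by (auto simp: z1_def)
  have colsum: "realmat W *v y - realmat W *v x = (\<Sum>j\<in>UNIV. (y - x)$j *\<^sub>R col W j)" for x y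
    by (simp add: mv_lin(2)[symmetric] mv_cols scaleR_diff_left sum_subtractf)
  have Xb: "g (realmat W *v z1) \<le> g (realmat W *v xs) + X"
  proof (cases "wn = 0")
    case True
    then have "W $ i $ j = 0" for i j using wn(2)[of i j] by simp
    then have "col W j = 0" for j by (simp add: col_def vec_eq_iff)
    then have "realmat W *v y = 0" for y by (simp add: mv_cols)
    moreover have "X = 0" using True wn(1) by (simp add: X_def)
    ultimately show ?thesis by simp
  next
    case False
    obtain i0 j0 where ij0: "W $ i0 $ j0 \<noteq> 0" using wn(3)[OF False] by blast
    have L0: "0 \<le> L"
    proof (rule ccontr)
      assume "\<not> 0 \<le> L"
      have ax: "axis j0 (1::real) \<in> unit_box" by (simp add: unit_box_def axis_def)
      have zb: "(0::real^'n) \<in> unit_box" by (simp add: unit_box_def)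
      have "norminf (g' (col W j0) - g' 0) \<le> L * norm1 (col W j0 - 0)"
        using lipschitz[OF inP[OF ax] inP[OF zb]] by (simp add: mv_axis)
      moreover have "col W j0 \<noteq> 0" using ij0 by (auto simp: col_def vec_eq_iff)
      then have "0 < norm1 (col W j0)" using norm1_nonneg[of "col W j0"] norm1_zero_iff[of "col W j0"] by simp
      ultimately show False using norminf_nonneg[of "g' (col W j0) - g' 0"] \<open>\<not> 0 \<le> L\<close>
        by (simp add: mult_neg_pos) (smt (verit) mult_neg_pos)
    qed
    have mb: "g (realmat W *v z1) - g (realmat W *v xs) \<le> g' (realmat W *v xs) \<bullet> (realmat W *v z1 - realmat W *v xs)
            + L * (norm1 (realmat W *v z1 - realmat W *v xs))\<^sup>2"
      by (rule mvt_bound[OF Pdef grad lipschitz L0 xs z1box])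
    have inner0: "g' (realmat W *v xs) \<bullet> (realmat W *v z1 - realmat W *v xs) = 0"
    proof -
      have "g' (realmat W *v xs) \<bullet> (realmat W *v z1 - realmat W *v xs)
            = (\<Sum>j\<in>UNIV. (z1 - xs)$j * (g' (realmat W *v xs) \<bullet> col W j))"
        by (simp add: colsum inner_sum_right)
      also have "\<dots> = 0"
      proof (intro sum.neutral ballI)
        fix j
        show "(z1 - xs)$j * (g' (realmat W *v xs) \<bullet> col W j) = 0"
        proof (cases "j \<in> F")
          case True
          then have "0 < xs$j" "xs$j < 1" using xs01[of j] by (auto simp: F_def fractional_entries_def)
          then show ?thesis using deriv_zero[OF Pdef grad xs xmin] by simp
        next
          case False
          then show ?thesis using z1F by simp
        qed
      qed
      finally show ?thesis .
    qed
    have nd: "norm1 (realmat W *v z1 - realmat W *v xs) \<le> M * (M * real wn) / 2"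
    proof -
      have "norm1 (realmat W *v z1 - realmat W *v xs) \<le> (\<Sum>j\<in>UNIV. norm1 ((z1 - xs)$j *\<^sub>R col W j))"
        unfolding colsum by (rule norm1_sum) simp
      also have "\<dots> \<le> (\<Sum>j\<in>UNIV. (if j \<in> F then 1/2 * (M * real wn) else 0))"
      proof (intro sum_mono)
        fix j
        have nc: "norm1 (col W j) \<le> M * real wn" using norm1_col[of W wn j] wn(2) by (simp add: M_def)
        show "norm1 ((z1 - xs)$j *\<^sub>R col W j) \<le> (if j \<in> F then 1/2 * (M * real wn) else 0)"
        proof (cases "j \<in> F")
          case True
          have "\<bar>(z1 - xs)$j\<bar> * norm1 (col W j) \<le> 1/2 * (M * real wn)"
            using z1d[of j] nc norm1_nonneg[of "col W j"] by (intro mult_mono) auto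
          then show ?thesis using True by (simp add: norm1_scaleR)
        next
          case False
          then show ?thesis using z1F[of j] by (simp add: norm1_def)
        qed
      qed
      also have "\<dots> = real (card F) * (1/2 * (M * real wn))"
        by (simp add: sum.If_cases)
      also have "\<dots> \<le> M * (1/2 * (M * real wn))"
        using cF by (intro mult_right_mono) (auto simp: F_def M_def)
      finally show ?thesis by simp
    qed
    have "L * (norm1 (realmat W *v z1 - realmat W *v xs))\<^sup>2 \<le> L * (M * (M * real wn) / 2)\<^sup>2"
      using nd norm1_nonneg L0 by (intro mult_left_mono power_mono) auto
    also have "\<dots> = X" using wn(1) by (simp add: X_def M_def power2_eq_square field_simps power4_eq_xxxx)
    finally show ?thesis using mb inner0 by simp
  qed
  have binfin: "finite (binary_points :: (real^'n) set)"
  proof -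
    have "binary_points = {q::real^'n. \<forall>k. q$k \<in> {0,1}}" by (auto simp: binary_points_def)
    moreover have "finite {q::real^'n. \<forall>k. q$k \<in> {0,1}}" using box_count[of "\<lambda>_::'n. {0,1::real}"] by simp
    ultimately show ?thesis by simp
  qed
  have "finite ((\<lambda>y. g (realmat W *v y)) ` binary_points)" "(\<lambda>y. g (realmat W *v y)) ` binary_points \<noteq> {}"
    using binfin z1b by auto
  then have "Min ((\<lambda>y. g (realmat W *v y)) ` binary_points) \<in> (\<lambda>y. g (realmat W *v y)) ` binary_points" by (rule Min_in)
  then obtain zopt where zopt: "zopt \<in> binary_points" "g (realmat W *v zopt) = Min ((\<lambda>y. g (realmat W *v y)) ` binary_points)"
    by auto
  have zoptmin: "\<forall>y\<in>binary_points. g (realmat W *v zopt) \<le> g (realmat W *v y)"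
    using zopt(2) binfin by auto
  define Zs where "Zs = {z \<in> binary_points. realmat W *v z = realmat W *v zopt}"
  have Zsfin: "finite Zs" "Zs \<noteq> {}" using binfin zopt(1) by (auto simp: Zs_def)
  have "Min ((\<lambda>z. norm1 (z - xs)) ` Zs) \<in> (\<lambda>z. norm1 (z - xs)) ` Zs" using Zsfin by (intro Min_in) auto
  then obtain z where z: "z \<in> Zs" "norm1 (z - xs) = Min ((\<lambda>z. norm1 (z - xs)) ` Zs)" by auto
  have zclose: "\<And>z'. z' \<in> Zs \<Longrightarrow> norm1 (z - xs) \<le> norm1 (z' - xs)" using z(2) Zsfin by auto
  have zb: "z \<in> binary_points" and Az: "realmat W *v z = realmat W *v zopt" using z(1) by (auto simp: Zs_def)
  have zmin: "\<forall>y\<in>binary_points. g (realmat W *v z) \<le> g (realmat W *v y)" using zoptmin Az by simp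
  have z01: "z$j = 0 \<or> z$j = 1" for j using zb by (simp add: binary_points_def)
  have "0 \<le> z$j \<and> z$j \<le> 1" for j using z01[of j] by auto
  then have zbox: "z \<in> unit_box" by (simp add: unit_box_def)
  define R where "R = norm1 (realmat W *v z - realmat W *v xs)"
  have gz: "g (realmat W *v z) - g v \<le> X" using zoptmin z1b Xb gxv Az by (metis diff_le_eq add.commute order_trans)
  have gz0: "0 \<le> g (realmat W *v z) - g v" using v(2) inP[OF zbox] by simp
  have X0: "0 \<le> X" using gz gz0 by linarith
  have Y0: "0 \<le> Y" by (simp add: Y_def rpow_nonneg)
  have d1: "norm1 (realmat W *v z - v) \<le> \<mu> * Y"
  proof -
    have "norm1 (realmat W *v z - v) \<le> \<mu> * rpow (g (realmat W *v z) - g v) \<theta>" using v(3) inP[OF zbox] by simp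
    also have "\<dots> \<le> \<mu> * Y" unfolding Y_def using mu gz gz0 th by (intro mult_left_mono rpow_mono) auto
    finally show ?thesis .
  qed
  have d2: "norm1 (v - realmat W *v xs) \<le> \<mu> * Y"
  proof -
    have "norm1 (realmat W *v xs - v) \<le> \<mu> * rpow (g (realmat W *v xs) - g v) \<theta>" using v(3) inP[OF xs] by simp
    also have "\<dots> \<le> \<mu> * Y" unfolding Y_def using mu gxv X0 th by (intro mult_left_mono rpow_mono) auto
    finally show ?thesis by (simp add: norm1_minus_commute)
  qed
  have Rb: "R \<le> 2 * (\<mu> * Y)"
  proof -
    have "R = norm1 ((realmat W *v z - v) + (v - realmat W *v xs))" by (simp add: R_def)
    also have "\<dots> \<le> norm1 (realmat W *v z - v) + norm1 (v - realmat W *v xs)" by (rule norm1_add)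
    finally show ?thesis using d1 d2 by simp
  qed
  have R0: "wn = 0 \<Longrightarrow> R = 0"
  proof -
    assume "wn = 0"
    then have "W $ i $ j = 0" for i j using wn(2)[of i j] by simp
    then have "col W j = 0" for j by (simp add: col_def vec_eq_iff)
    then show "R = 0" by (simp add: R_def colsum norm1_def)
  qed
  define D where "D = {j. j \<notin> F \<and> z$j \<noteq> xs$j}"
  define u where "u j = (z$j - xs$j) *\<^sub>R col W j" for j
  have DF: "D \<inter> F = {}" by (auto simp: D_def)
  have Dabs: "j \<in> D \<Longrightarrow> \<bar>z$j - xs$j\<bar> = 1" for j
    using z01[of j] xsF[of j] by (auto simp: D_def)
  have Dint: "j \<in> D \<Longrightarrow> z$j - xs$j \<in> \<int>" for j
    using z01[of j] xsF[of j] by (auto simp: D_def)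
  have uint: "\<forall>j\<in>D. \<forall>k. u j $ k \<in> \<int>"
    using Dint by (auto simp: u_def col_def intro!: Ints_mult)
  have ubnd: "\<forall>j\<in>D. \<forall>k. \<bar>u j $ k\<bar> \<le> real wn"
  proof (intro ballI allI)
    fix j k assume "j \<in> D"
    then have "\<bar>u j $ k\<bar> = real_of_int \<bar>W $ k $ j\<bar>" using Dabs by (simp add: u_def col_def abs_mult)
    also have "\<dots> \<le> real wn" using wn(2)[of k j] by (metis of_int_le_iff of_int_of_nat_eq)
    finally show "\<bar>u j $ k\<bar> \<le> real wn" .
  qed
  have zsf: "\<forall>B. B \<subseteq> D \<longrightarrow> B \<noteq> {} \<longrightarrow> (\<Sum>j\<in>B. u j) \<noteq> 0"
  proof (intro allI impI)
    fix B assume B: "B \<subseteq> D" "B \<noteq> {}"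
    show "(\<Sum>j\<in>B. u j) \<noteq> 0"
    proof
      assume s0: "(\<Sum>j\<in>B. u j) = 0"
      define z' where "z' = (\<chi> j. if j \<in> B then xs$j else z$j)"
      have z'b: "z' \<in> binary_points" using B z01 xsF by (auto simp: z'_def binary_points_def D_def)
      have "realmat W *v z' - realmat W *v z = (\<Sum>j\<in>UNIV. (if j \<in> B then - u j else 0))"
        unfolding colsum by (intro sum.cong) (auto simp: z'_def u_def algebra_simps)
      also have "\<dots> = - (\<Sum>j\<in>B. u j)" by (simp add: sum.If_cases sum_negf)
      finally have "realmat W *v z' = realmat W *v z" using s0 by simp
      then have "z' \<in> Zs" using z'b Az by (simp add: Zs_def)
      then have le: "norm1 (z - xs) \<le> norm1 (z' - xs)" by (rule zclose)
      have "norm1 (z - xs) = (\<Sum>j\<in>UNIV. \<bar>z'$j - xs$j\<bar> + (if j \<in> B then \<bar>z$j - xs$j\<bar> else 0))"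
        unfolding norm1_def by (intro sum.cong) (auto simp: z'_def)
      also have "\<dots> = norm1 (z' - xs) + (\<Sum>j\<in>B. \<bar>z$j - xs$j\<bar>)"
        by (simp add: sum.distrib norm1_def sum.If_cases)
      also have "(\<Sum>j\<in>B. \<bar>z$j - xs$j\<bar>) = real (card B)" using B Dabs by (simp add: subset_iff)
      finally have "norm1 (z - xs) = norm1 (z' - xs) + real (card B)" .
      moreover have "0 < card B" using B by (simp add: card_gt_0_iff)
      ultimately show False using le by simp
    qed
  qed
  have pc: "real (card D) + 1 \<le> (2 * real (CARD('m) * wn) + 1) ^ CARD('m)
            + norm1 (\<Sum>j\<in>D. u j) * (2 * real (CARD('m) * wn) + 1) ^ (CARD('m) - 1)"
    by (rule prox_comb[OF _ uint ubnd zsf]) simp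
  have split: "(\<Sum>j\<in>UNIV. f j) = (\<Sum>j\<in>D. f j) + (\<Sum>j\<in>F. f j)" if "\<And>j. j \<notin> D \<Longrightarrow> j \<notin> F \<Longrightarrow> f j = 0"
    for f :: "'n \<Rightarrow> 'b::comm_monoid_add"
  proof -
    have "(\<Sum>j\<in>UNIV. f j) = (\<Sum>j\<in>D \<union> F. f j)" using that by (intro sum.mono_neutral_right) auto
    also have "\<dots> = (\<Sum>j\<in>D. f j) + (\<Sum>j\<in>F. f j)" using DF by (intro sum.union_disjoint) auto
    finally show ?thesis .
  qed
  have zeroout: "j \<notin> D \<Longrightarrow> j \<notin> F \<Longrightarrow> z$j = xs$j" for j by (simp add: D_def)
  have zx1: "\<bar>z$j - xs$j\<bar> \<le> 1" for j using z01[of j] xs01[of j] by auto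
  have rb: "norm1 (\<Sum>j\<in>D. u j) \<le> R + M * (M * real wn)"
  proof -
    have "realmat W *v z - realmat W *v xs = (\<Sum>j\<in>D. u j) + (\<Sum>j\<in>F. (z - xs)$j *\<^sub>R col W j)"
      unfolding colsum by (subst split) (auto simp: zeroout u_def)
    then have e: "(\<Sum>j\<in>D. u j) = (realmat W *v z - realmat W *v xs) + (- (\<Sum>j\<in>F. (z - xs)$j *\<^sub>R col W j))"
      by (simp add: algebra_simps)
    have "norm1 (- (\<Sum>j\<in>F. (z - xs)$j *\<^sub>R col W j)) = norm1 (\<Sum>j\<in>F. (z - xs)$j *\<^sub>R col W j)"
      using norm1_scaleR[of "-1"] by simp
    also have "\<dots> \<le> (\<Sum>j\<in>F. norm1 ((z - xs)$j *\<^sub>R col W j))" by (rule norm1_sum) simp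
    also have "\<dots> \<le> (\<Sum>j\<in>F. M * real wn)"
    proof (intro sum_mono)
      fix j
      have nc: "norm1 (col W j) \<le> M * real wn" using norm1_col[of W wn j] wn(2) by (simp add: M_def)
      have "\<bar>(z - xs)$j\<bar> * norm1 (col W j) \<le> 1 * (M * real wn)"
        using zx1[of j] nc norm1_nonneg[of "col W j"] by (intro mult_mono) auto
      then show "norm1 ((z - xs)$j *\<^sub>R col W j) \<le> M * real wn" by (simp add: norm1_scaleR)
    qed
    also have "\<dots> = real (card F) * (M * real wn)" by simp
    also have "\<dots> \<le> M * (M * real wn)" using cF by (intro mult_right_mono) (auto simp: F_def M_def)
    finally have "norm1 (- (\<Sum>j\<in>F. (z - xs)$j *\<^sub>R col W j)) \<le> M * (M * real wn)" .
    then show ?thesis unfolding e R_def using norm1_add by (smt (verit))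
  qed
  have dist: "norm1 (xs - z) \<le> real (card D) + M"
  proof -
    have "norm1 (xs - z) = (\<Sum>j\<in>D. \<bar>z$j - xs$j\<bar>) + (\<Sum>j\<in>F. \<bar>z$j - xs$j\<bar>)"
      unfolding norm1_minus_commute[of xs z] norm1_def by (subst split) (auto simp: zeroout abs_minus_commute)
    also have "(\<Sum>j\<in>D. \<bar>z$j - xs$j\<bar>) = real (card D)" using Dabs by simp
    also have "(\<Sum>j\<in>F. \<bar>z$j - xs$j\<bar>) \<le> (\<Sum>j\<in>F. 1)" using zx1 by (intro sum_mono) auto
    also have "\<dots> \<le> M" using cF by (simp add: F_def M_def)
    finally show ?thesis by simp
  qed
  define K where "K = 2 * M * real wn + 1"
  define Bp where "Bp = K ^ (CARD('m) - 1)"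
  have KB: "K ^ CARD('m) = K * Bp"
    unfolding Bp_def by (metis Suc_pred' power_Suc zero_less_card_finite)
  have pc': "real (card D) + 1 \<le> K * Bp + (R + M * (M * real wn)) * Bp"
  proof -
    have "K = 2 * real (CARD('m) * wn) + 1" by (simp add: K_def M_def)
    then have "real (card D) + 1 \<le> K * Bp + norm1 (\<Sum>j\<in>D. u j) * Bp" using pc KB by (simp add: Bp_def)
    moreover have "norm1 (\<Sum>j\<in>D. u j) * Bp \<le> (R + M * (M * real wn)) * Bp"
      using rb M1 by (intro mult_right_mono) (auto simp: Bp_def K_def)
    ultimately show ?thesis by simp
  qed
  have goal: "real (card D) + M \<le> (\<mu> * Y + M + 2) * (K * Bp)"
  proof (cases "wn = 0")
    case True
    then have "K = 1" "Bp = 1" "R = 0" using R0 by (auto simp: K_def Bp_def)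
    then show ?thesis using pc' True mu Y0 by simp
  next
    case False
    then have wn1: "1 \<le> real wn" by simp
    have MN: "1 \<le> M * real wn" using M1 wn1 by (metis mult_mono' mult.right_neutral zero_le_one order_trans)
    have K3: "3 \<le> K" using MN by (simp add: K_def)
    have B1: "1 \<le> Bp" unfolding Bp_def using K3 by (simp add: one_le_power)
    have muY: "0 \<le> \<mu> * Y" using mu Y0 by simp
    have a1: "2 * (\<mu> * Y) * Bp \<le> \<mu> * Y * (K * Bp)"
    proof -
      have "2 * (\<mu> * Y) * Bp = (\<mu> * Y * Bp) * 2" by simp
      also have "\<dots> \<le> (\<mu> * Y * Bp) * K" using K3 muY B1 by (intro mult_left_mono) auto
      finally show ?thesis by (simp add: algebra_simps)
    qed
    have a2: "M * (M * real wn) * Bp + M \<le> M * (K * Bp)"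
    proof -
      have "M * (K * Bp) = M * (M * real wn) * Bp + M * (M * real wn) * Bp + M * Bp" by (simp add: K_def algebra_simps)
      moreover have "0 \<le> M * (M * real wn) * Bp" using M1 B1 by simp
      moreover have "M \<le> M * Bp" using M1 B1 by simp
      ultimately show ?thesis by linarith
    qed
    have a3: "0 \<le> K * Bp" using K3 B1 by simp
    have "real (card D) + M \<le> K * Bp + (R + M * (M * real wn)) * Bp - 1 + M" using pc' by simp
    also have "\<dots> \<le> K * Bp + 2 * (\<mu> * Y) * Bp + M * (M * real wn) * Bp + M"
    proof -
      have "R * Bp \<le> 2 * (\<mu> * Y) * Bp" using Rb B1 by (intro mult_right_mono) auto
      then show ?thesis by (simp add: algebra_simps)
    qed
    also have "\<dots> \<le> (\<mu> * Y + M + 2) * (K * Bp)"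
      using a1 a2 a3 by (simp add: algebra_simps)
    finally show ?thesis .
  qed
  have Keq: "2 * real (CARD('m)) * matinf W + 1 = K" by (simp add: K_def M_def wn(1))
  show "\<exists>zs. zs \<in> binary_points \<and> (\<forall>y\<in>binary_points. g (realmat W *v zs) \<le> g (realmat W *v y))
               \<and> norm1 (xs - zs) \<le>
                 (\<mu> * rpow (real (CARD('m)) ^ 4 * (L / 4) * matinf W ^ 2) \<theta> + real (CARD('m)) + 2)
                 * (2 * real (CARD('m)) * matinf W + 1) ^ CARD('m)"
  proof (intro exI[of _ z] conjI zb zmin)
    show "norm1 (xs - z) \<le> (\<mu> * rpow (real (CARD('m)) ^ 4 * (L / 4) * matinf W ^ 2) \<theta> + real (CARD('m)) + 2)
                 * (2 * real (CARD('m)) * matinf W + 1) ^ CARD('m)"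
      unfolding Keq KB using dist goal by (simp add: Y_def X_def M_def)
  qed
qed

end
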